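(* Let $\mathbf B_n$ be the $n$-th Bell number. Then $\lim_{n\to\infty}\mathbf B_n/\alpha_n(1\text{-}23\text{-}4)=0$.
   Context: A permutation $\pi=\pi_1\cdots\pi_n$ of $\{1,\dots,n\}$ contains the generalized pattern $1\text{-}23\text{-}4$ if there are indices $a<b<b+1<c$ with $\pi_a<\pi_b<\pi_{b+1}<\pi_c$; otherwise it avoids it. $\alpha_n(1\text{-}23\text{-}4)$ is the number of permutations of $\{1,\dots,n\}$ avoiding it. The Bell number $\mathbf B_n$ is the number of set partitions of an $n$-element set. *)

theory Defs
  imports "HOL-Analysis.Analysis" "HOL-Library.Disjoint_Sets" "HOL-Combinatorics.Multiset_Permutations"
begin

definition bell :: "nat \<Rightarrow> nat" where
  "bell n = card {P. partition_on {1..n} P}"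

definition contains_1_23_4 :: "nat list \<Rightarrow> bool" where
  "contains_1_23_4 p \<longleftrightarrow> (\<exists>a b c. a < b \<and> b + 1 < c \<and> c < length p \<and>
      p ! a < p ! b \<and> p ! b < p ! (b + 1) \<and> p ! (b + 1) < p ! c)"

definition alpha_1_23_4 :: "nat \<Rightarrow> nat" where
  "alpha_1_23_4 n = card {p \<in> permutations_of_set {1..n}. \<not> contains_1_23_4 p}"

end

theory Submission
  imports Defs
begin

definition GG :: "nat \<Rightarrow> (nat \<Rightarrow> nat) set" where
  "GG N = {g \<in> {1..N} \<rightarrow>\<^sub>E {1..N}. \<forall>x\<in>{1..N}. g (g x) = g x \<and> g x \<le> x}"

definition fixs :: "nat \<Rightarrow> (nat \<Rightarrow> nat) \<Rightarrow> nat set" where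
  "fixs N g = {x\<in>{1..N}. g x = x}"

lemma GG_finite: "finite (GG N)"
proof -
  have "GG N \<subseteq> {1..N} \<rightarrow>\<^sub>E {1..N}" unfolding GG_def by auto
  moreover have "finite ({1..N} \<rightarrow>\<^sub>E {1..N::nat})" by (intro finite_PiE) auto
  ultimately show ?thesis using finite_subset by blast
qed

lemma part_ex1:
  assumes "partition_on A P" "x \<in> A"
  shows "\<exists>!p. p \<in> P \<and> x \<in> p"
proof -
  have U: "\<Union>P = A" using partition_onD1[OF assms(1)] by simp
  from assms(2) obtain p where p: "p \<in> P" "x \<in> p" unfolding U[symmetric] by blast
  moreover have "q = p" if "q \<in> P" "x \<in> q" for q
    using partition_onD2[OF assms(1)] p that unfolding disjoint_def by blast
  ultimately show ?thesis by blast
qed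

definition gP :: "nat \<Rightarrow> nat set set \<Rightarrow> nat \<Rightarrow> nat" where
  "gP n P = (\<lambda>x. if x \<in> {1..n} then Min (THE p. p \<in> P \<and> x \<in> p) else undefined)"

lemma gP_block:
  assumes "partition_on {1..n} P" "p \<in> P" "x \<in> p"
  shows "gP n P x = Min p" "gP n P x \<in> p" "x \<in> {1..n}"
proof -
  have U: "\<Union>P = {1..n}" using partition_onD1[OF assms(1)] by simp
  have sub: "p \<subseteq> {1..n}" using U assms(2) by blast
  show xA: "x \<in> {1..n}" using sub assms(3) by blast
  have "(THE p. p \<in> P \<and> x \<in> p) = p"
    using part_ex1[OF assms(1) xA] assms(2,3) by (metis (mono_tags, lifting) the_equality)
  then show *: "gP n P x = Min p" using xA unfolding gP_def by simp
  have "finite p" using sub finite_subset by blast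
  then show "gP n P x \<in> p" using * assms(3) Min_in by auto
qed

lemma gP_in: assumes "partition_on {1..n} P" shows "gP n P \<in> GG n"
proof -
  have "gP n P x \<in> {1..n} \<and> gP n P (gP n P x) = gP n P x \<and> gP n P x \<le> x" if xA: "x \<in> {1..n}" for x
  proof -
    obtain p where p: "p \<in> P" "x \<in> p" using part_ex1[OF assms xA] by blast
    have U: "\<Union>P = {1..n}" using partition_onD1[OF assms] by simp
    have fp: "finite p" using p U finite_subset[of p "{1..n}"] by blast
    have a: "gP n P x = Min p" "gP n P x \<in> p" using gP_block[OF assms p] by auto
    then have "gP n P (gP n P x) = Min p" using gP_block[OF assms p(1)] by simp
    moreover have "Min p \<le> x" using fp p by simp
    ultimately show ?thesis using a gP_block(3)[OF assms p(1) a(2)] by simp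
  qed
  moreover have "gP n P x = undefined" if "x \<notin> {1..n}" for x
    using that unfolding gP_def by auto
  ultimately show ?thesis unfolding GG_def by (auto simp add: PiE_iff extensional_def)
qed

lemma gP_inj: "inj_on (gP n) {P. partition_on {1..n} P}"
proof (rule inj_onI)
  fix P Q assume P0: "P \<in> {P. partition_on {1..n} P}" and Q0: "Q \<in> {P. partition_on {1..n} P}"
    and eq: "gP n P = gP n Q"
  have P: "partition_on {1..n} P" and Q: "partition_on {1..n} Q" using P0 Q0 by auto
  have sub: "p \<in> Q" if P: "partition_on {1..n} P" and Q: "partition_on {1..n} Q"
    and eq: "gP n P = gP n Q" and p: "p \<in> P" for P Q p
  proof -
    have "p \<noteq> {}" using P p partition_onD3 by blast
    then obtain x where x: "x \<in> p" by blast
    have xA: "x \<in> {1..n}" using gP_block(3)[OF P p x] .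
    obtain q where q: "q \<in> Q" "x \<in> q" using part_ex1[OF Q xA] by blast
    have "y \<in> p \<longleftrightarrow> y \<in> q" for y
    proof
      assume y: "y \<in> p"
      have yA: "y \<in> {1..n}" using gP_block(3)[OF P p y] .
      obtain q' where q': "q' \<in> Q" "y \<in> q'" using part_ex1[OF Q yA] by blast
      have "gP n Q y = gP n Q x" using gP_block(1)[OF P p x] gP_block(1)[OF P p y] eq by simp
      then have "gP n Q x \<in> q'" using gP_block(2)[OF Q q'] by simp
      moreover have "gP n Q x \<in> q" using gP_block(2)[OF Q q(1) q(2)] .
      ultimately have "q = q'" using partition_onD2[OF Q] q q' unfolding disjoint_def by blast
      then show "y \<in> q" using q' by simp
    next
      assume y: "y \<in> q"
      have yA: "y \<in> {1..n}" using gP_block(3)[OF Q q(1) y] .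
      obtain p' where p': "p' \<in> P" "y \<in> p'" using part_ex1[OF P yA] by blast
      have "gP n P y = gP n P x" using gP_block(1)[OF Q q(1) q(2)] gP_block(1)[OF Q q(1) y] eq by simp
      then have "gP n P x \<in> p'" using gP_block(2)[OF P p'] by simp
      moreover have "gP n P x \<in> p" using gP_block(2)[OF P p x] .
      ultimately have "p = p'" using partition_onD2[OF P] p p' unfolding disjoint_def by blast
      then show "y \<in> p" using p' by simp
    qed
    then have "p = q" by blast
    then show ?thesis using q by simp
  qed
  show "P = Q" using sub[OF P Q eq] sub[OF Q P eq[symmetric]] by blast
qed

lemma bell_le_GG: "bell n \<le> card (GG n)"
  unfolding bell_def
  by (rule card_inj_on_le[OF gP_inj]) (auto simp: gP_in GG_finite)

lemma fixs_finite: "finite (fixs N g)" unfolding fixs_def by auto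

lemma fixs_card_le: "card (fixs N g) \<le> N"
proof -
  have "fixs N g \<subseteq> {1..N}" unfolding fixs_def by auto
  then have "card (fixs N g) \<le> card {1..N}" by (intro card_mono) auto
  then show ?thesis by simp
qed

lemma GG_rec: "card (GG (Suc N)) \<le> (\<Sum>g\<in>GG N. card (fixs N g) + 1)"
proof -
  define h where "h = (\<lambda>g'::nat\<Rightarrow>nat. (restrict g' {1..N}, g' (Suc N)))"
  define S where "S = Sigma (GG N) (\<lambda>g. insert (Suc N) (fixs N g))"
  have inj: "inj_on h (GG (Suc N))"
  proof (rule inj_onI)
    fix g1 g2 assume g1: "g1 \<in> GG (Suc N)" and g2: "g2 \<in> GG (Suc N)" and e: "h g1 = h g2"
    have "g1 x = g2 x" for x
    proof (cases "x \<in> {1..Suc N}")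
      case True
      then show ?thesis
      proof (cases "x = Suc N")
        case True then show ?thesis using e unfolding h_def by simp
      next
        case False
        then have "x \<in> {1..N}" using \<open>x \<in> {1..Suc N}\<close> by auto
        then show ?thesis using e unfolding h_def by (metis prod.inject restrict_apply')
      qed
    next
      case False
      then show ?thesis using g1 g2 unfolding GG_def by (auto simp: PiE_iff extensional_def)
    qed
    then show "g1 = g2" by blast
  qed
  have img: "h ` GG (Suc N) \<subseteq> S"
  proof
    fix y assume "y \<in> h ` GG (Suc N)"
    then obtain g where g: "g \<in> GG (Suc N)" and y: "y = h g" by blast
    have gp: "\<And>x. x \<in> {1..Suc N} \<Longrightarrow> g x \<in> {1..Suc N} \<and> g (g x) = g x \<and> g x \<le> x"
      using g unfolding GG_def by auto
    have r: "restrict g {1..N} \<in> GG N"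
    proof -
      have "\<And>x. x \<in> {1..N} \<Longrightarrow> g x \<in> {1..N} \<and> g (g x) = g x \<and> g x \<le> x"
        using gp by fastforce
      then show ?thesis unfolding GG_def by auto
    qed
    have "g (Suc N) \<in> insert (Suc N) (fixs N (restrict g {1..N}))"
    proof (cases "g (Suc N) = Suc N")
      case False
      have "g (Suc N) \<in> {1..Suc N}" "g (g (Suc N)) = g (Suc N)" using gp[of "Suc N"] by auto
      then have "g (Suc N) \<in> {1..N}" "g (g (Suc N)) = g (Suc N)" using False by auto
      then show ?thesis unfolding fixs_def by auto
    qed simp
    then show "y \<in> S" using r y unfolding S_def h_def by auto
  qed
  have finS: "finite S" unfolding S_def using GG_finite fixs_finite by auto
  have "card (GG (Suc N)) \<le> card S" using card_inj_on_le[OF inj img finS] .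
  also have "card S = (\<Sum>g\<in>GG N. card (insert (Suc N) (fixs N g)))"
    unfolding S_def using GG_finite fixs_finite by (simp add: card_SigmaI)
  also have "\<dots> \<le> (\<Sum>g\<in>GG N. card (fixs N g) + 1)"
    by (intro sum_mono) (simp add: card_insert_if fixs_finite)
  finally show ?thesis .
qed

lemma GG_lower:
  assumes "1 \<le> r" "r \<le> N"
  shows "r ^ (N - r) \<le> card (GG N)"
proof -
  define A where "A = PiE {r+1..N} (\<lambda>_. {1..r})"
  define h where "h = (\<lambda>f::nat\<Rightarrow>nat. (\<lambda>x. if x \<in> {1..r} then x else f x))"
  have cA: "card A = r ^ (N - r)" unfolding A_def by (simp add: card_PiE)
  have inj: "inj_on h A"
  proof (rule inj_onI)
    fix f1 f2 assume f1: "f1 \<in> A" and f2: "f2 \<in> A" and e: "h f1 = h f2"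
    show "f1 = f2"
    proof (rule PiE_ext[OF f1[unfolded A_def] f2[unfolded A_def]])
      fix x assume "x \<in> {r+1..N}"
      then have "x \<notin> {1..r}" by auto
      then show "f1 x = f2 x" using fun_cong[OF e, of x] unfolding h_def by auto
    qed
  qed
  have img: "h ` A \<subseteq> GG N"
  proof
    fix y assume "y \<in> h ` A"
    then obtain f where f: "f \<in> A" and y: "y = h f" by blast
    have fv: "\<And>x. x \<in> {r+1..N} \<Longrightarrow> f x \<in> {1..r}" using f unfolding A_def by auto
    have fu: "\<And>x. x \<notin> {r+1..N} \<Longrightarrow> f x = undefined" using f unfolding A_def by auto
    have a: "h f x \<in> {1..N} \<and> h f (h f x) = h f x \<and> h f x \<le> x" if "x \<in> {1..N}" for x
    proof (cases "x \<le> r")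
      case True then show ?thesis using that unfolding h_def by auto
    next
      case False
      then have "x \<in> {r+1..N}" using that by auto
      then have "f x \<in> {1..r}" using fv by auto
      then show ?thesis using False that assms unfolding h_def by auto
    qed
    have b: "h f x = undefined" if "x \<notin> {1..N}" for x
      using that fu assms unfolding h_def by auto
    show "y \<in> GG N" unfolding y GG_def using a b by (auto simp: PiE_iff extensional_def)
  qed
  have "card A \<le> card (GG N)" using card_inj_on_le[OF inj img GG_finite] .
  then show ?thesis using cA by simp
qed

lemma GG_many:
  assumes "1 \<le> N"
  shows "card {g\<in>GG N. k \<le> card (fixs N g)} \<le> 2 ^ N * N ^ (N - k)"
proof -
  define SS where "SS = {S. S \<subseteq> {1..N} \<and> k \<le> card S}"
  define F where "F = (\<lambda>S. PiE {1..N} (\<lambda>x. if x \<in> S then {x} else {1..N}))"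
  have sub: "{g\<in>GG N. k \<le> card (fixs N g)} \<subseteq> (\<Union>S\<in>SS. F S)"
  proof
    fix g assume g: "g \<in> {g\<in>GG N. k \<le> card (fixs N g)}"
    have "fixs N g \<in> SS" using g unfolding SS_def fixs_def by auto
    moreover have "g \<in> F (fixs N g)" using g unfolding F_def GG_def fixs_def
      by (auto simp: PiE_iff)
    ultimately show "g \<in> (\<Union>S\<in>SS. F S)" by blast
  qed
  have finSS: "finite SS" unfolding SS_def by simp
  have cF: "card (F S) \<le> N ^ (N - k)" if "S \<in> SS" for S
  proof -
    have S: "S \<subseteq> {1..N}" "k \<le> card S" using that unfolding SS_def by auto
    have "card (F S) = (\<Prod>x\<in>{1..N}. card (if x \<in> S then {x} else {1..N}))"
      unfolding F_def by (simp add: card_PiE)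
    also have "\<dots> = (\<Prod>x\<in>{1..N}. if x \<in> S then 1 else N)"
      by (intro prod.cong) auto
    also have "\<dots> = (\<Prod>x\<in>{1..N} - S. N)"
      by (subst prod.If_cases) (auto simp: Diff_eq)
    also have "\<dots> = N ^ card ({1..N} - S)" by simp
    also have "card ({1..N} - S) = N - card S" using S by (simp add: card_Diff_subset finite_subset)
    also have "N ^ (N - card S) \<le> N ^ (N - k)" using S assms by (intro power_increasing) auto
    finally show ?thesis .
  qed
  have "card {g\<in>GG N. k \<le> card (fixs N g)} \<le> card (\<Union>S\<in>SS. F S)"
    using sub by (intro card_mono) (auto simp: F_def finSS intro!: finite_PiE)
  also have "\<dots> \<le> (\<Sum>S\<in>SS. card (F S))" by (rule card_UN_le[OF finSS])
  also have "\<dots> \<le> (\<Sum>S\<in>SS. N ^ (N - k))" by (intro sum_mono cF)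
  also have "\<dots> = card SS * N ^ (N - k)" by simp
  also have "card SS \<le> card (Pow {1..N})" unfolding SS_def by (intro card_mono) auto
  also have "card (Pow {1..N}) = 2 ^ N" by (simp add: card_Pow)
  finally show ?thesis by simp
qed

definition ins :: "nat list \<Rightarrow> nat \<Rightarrow> nat \<Rightarrow> nat list" where
  "ins L p a = take p L @ a # drop p L"

lemma ins_length: "p \<le> length L \<Longrightarrow> length (ins L p a) = Suc (length L)"
  unfolding ins_def by simp

lemma ins_nth:
  assumes "p \<le> length L"
  shows "ins L p a ! i = (if i < p then L ! i else if i = p then a else L ! (i - 1))"
proof -
  have lt: "length (take p L) = p" using assms by simp
  show ?thesis
  proof (cases "i < p")
    case True then have "i < length (take p L)" using assms by simp
    then show ?thesis unfolding ins_def using True by (simp add: nth_append)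
  next
    case False
    then show ?thesis unfolding ins_def using assms
      by (auto simp: nth_append lt nth_Cons' )
  qed
qed

lemma ins_set: "set (ins L p a) = insert a (set L)"
proof -
  have "set L = set (take p L) \<union> set (drop p L)"
    by (metis append_take_drop_id set_append)
  then show ?thesis unfolding ins_def by auto
qed

lemma ins_distinct: "distinct L \<Longrightarrow> a \<notin> set L \<Longrightarrow> distinct (ins L p a)"
proof -
  assume d: "distinct L" and a: "a \<notin> set L"
  have "distinct (take p L @ drop p L)" using d by simp
  then have "distinct (take p L) \<and> distinct (drop p L) \<and> set (take p L) \<inter> set (drop p L) = {}"
    by (simp only: distinct_append)
  moreover have "a \<notin> set (take p L)" "a \<notin> set (drop p L)" using a in_set_takeD in_set_dropD by fastforce+
  ultimately show ?thesis unfolding ins_def by auto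
qed

lemma ins_removeAll: "a \<notin> set L \<Longrightarrow> removeAll a (ins L p a) = L"
proof -
  assume a: "a \<notin> set L"
  have "a \<notin> set (take p L)" "a \<notin> set (drop p L)" using a in_set_takeD in_set_dropD by fastforce+
  then have "removeAll a (ins L p a) = take p L @ drop p L" unfolding ins_def by simp
  then show ?thesis by simp
qed

lemma ins_takeWhile: "a \<notin> set L \<Longrightarrow> takeWhile (\<lambda>x. x \<noteq> a) (ins L p a) = take p L"
proof -
  assume a: "a \<notin> set L"
  have "a \<notin> set (take p L)" using a in_set_takeD by fastforce
  then show ?thesis unfolding ins_def by (subst takeWhile_append2) auto
qed

lemma ins_inj:
  assumes "a \<notin> set L" "a \<notin> set L'" "p \<le> length L" "p' \<le> length L'" "ins L p a = ins L' p' a"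
  shows "L = L'" "p = p'"
proof -
  show "L = L'" using ins_removeAll[OF assms(1), of p] ins_removeAll[OF assms(2), of p'] assms(5) by simp
  have "take p L = take p' L'" using ins_takeWhile[OF assms(1), of p] ins_takeWhile[OF assms(2), of p'] assms(5) by simp
  then have "length (take p L) = length (take p' L')" by simp
  then show "p = p'" using assms(3,4) by simp
qed

definition av :: "nat list \<Rightarrow> bool" where
  "av L \<longleftrightarrow> (\<forall>i j. j < i \<longrightarrow> Suc i < length L \<longrightarrow> L ! i < L ! Suc i \<longrightarrow> L ! i < L ! j)"

definition lrmin :: "nat list \<Rightarrow> nat \<Rightarrow> bool" where
  "lrmin L c \<longleftrightarrow> (\<forall>i j. j < i \<longrightarrow> i < length L \<longrightarrow> L ! i = c \<longrightarrow> c < L ! j)"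

lemma av_ins:
  assumes av: "av L" and p: "p \<le> length L" and big: "\<forall>x\<in>set L. x < a"
    and lm: "0 < p \<Longrightarrow> (\<forall>j < p - 1. L ! (p - 1) < L ! j)"
  shows "av (ins L p a)"
  unfolding av_def
proof (intro allI impI)
  fix i j assume ji: "j < i" and il: "Suc i < length (ins L p a)"
    and asc: "ins L p a ! i < ins L p a ! Suc i"
  have il': "i < length L" using il ins_length[OF p] by simp
  have bg: "\<And>k. k < length L \<Longrightarrow> L ! k < a" using big by auto
  note nth = ins_nth[OF p]
  show "ins L p a ! i < ins L p a ! j"
  proof (cases "Suc i < p")
    case True
    then have "L ! i < L ! Suc i" using asc nth by simp
    then have "L ! i < L ! j" using av ji True p unfolding av_def by auto
    then show ?thesis using nth True ji by simp
  next
    case False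
    show ?thesis
    proof (cases "Suc i = p")
      case True
      then have "L ! (p - 1) < L ! j" using lm ji by auto
      then show ?thesis using nth True ji by auto
    next
      case False2: False
      show ?thesis
      proof (cases "i = p")
        case True
        then have "ins L p a ! i = a" using nth by simp
        moreover have "ins L p a ! Suc i = L ! i" using nth True by simp
        ultimately show ?thesis using asc bg[OF il'] by simp
      next
        case False3: False
        then have ip: "p < i" using False False2 by auto
        have e1: "ins L p a ! i = L ! (i - 1)" "ins L p a ! Suc i = L ! i" using nth ip by auto
        have "L ! (i - 1) < L ! Suc (i - 1)" using asc e1 ip by simp
        have avL: "\<And>i j. j < i \<Longrightarrow> Suc i < length L \<Longrightarrow> L ! i < L ! Suc i \<Longrightarrow> L ! i < L ! j"
          using av unfolding av_def by blast
        show ?thesis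
        proof (cases "j < p")
          case True
          then have "L ! (i - 1) < L ! j" using avL[of j "i - 1"] \<open>L ! (i - 1) < L ! Suc (i - 1)\<close> ip il' by auto
          then show ?thesis using nth True e1 by simp
        next
          case False4: False
          show ?thesis
          proof (cases "j = p")
            case True
            then show ?thesis using nth e1 bg il' by auto
          next
            case False
            then have "p < j" using False4 by auto
            then have "L ! (i - 1) < L ! (j - 1)" using avL[of "j - 1" "i - 1"] \<open>L ! (i - 1) < L ! Suc (i - 1)\<close> ip il' ji by auto
            then show ?thesis using nth \<open>p < j\<close> e1 by simp
          qed
        qed
      qed
    qed
  qed
qed

lemma lrmin_ins:
  assumes "lrmin L c" "p \<le> length L" "\<forall>x\<in>set L. x < a" "c \<in> set L"
  shows "lrmin (ins L p a) c"
  unfolding lrmin_def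
proof (intro allI impI)
  fix i j assume ji: "j < i" and il: "i < length (ins L p a)" and e: "ins L p a ! i = c"
  note nth = ins_nth[OF assms(2)]
  have ca: "c < a" using assms by auto
  have lmL: "\<And>i j. j < i \<Longrightarrow> i < length L \<Longrightarrow> L ! i = c \<Longrightarrow> c < L ! j"
    using assms(1) unfolding lrmin_def by blast
  have il': "i \<le> length L" using il ins_length[OF assms(2)] by simp
  show "c < ins L p a ! j"
  proof (cases "i < p")
    case True
    then show ?thesis using lmL[of j i] e nth ji assms(2) by auto
  next
    case False
    then have "i \<noteq> p \<or> i = p" by simp
    have ip: "p < i" using False e nth ca by (cases "i = p") auto
    then have Li: "L ! (i - 1) = c" using e nth by simp
    have i1: "i - 1 < length L" using il' ip by simp
    show ?thesis
    proof (cases "j < p")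
      case True then show ?thesis using lmL[of j "i - 1"] Li i1 nth ip by auto
    next
      case False
      show ?thesis
      proof (cases "j = p")
        case True then show ?thesis using nth ca by simp
      next
        case False2: False
        then have "p < j" using False by simp
        then show ?thesis using lmL[of "j - 1" "i - 1"] Li i1 nth ip ji by auto
      qed
    qed
  qed
qed

fun ins_after :: "nat \<Rightarrow> nat \<Rightarrow> nat list \<Rightarrow> nat list" where
  "ins_after c a [] = []"
| "ins_after c a (x # xs) = (if x = c then x # a # xs else x # ins_after c a xs)"

lemma ins_after_eq:
  "c \<in> set L \<Longrightarrow> \<exists>p<length L. L ! p = c \<and> ins_after c a L = ins L (Suc p) a"
proof (induction L)
  case Nil then show ?case by simp
next
  case (Cons x xs)
  show ?case
  proof (cases "x = c")
    case True
    then show ?thesis by (intro exI[of _ 0]) (simp add: ins_def)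
  next
    case False
    then have "c \<in> set xs" using Cons.prems by simp
    then obtain p where "p < length xs" "xs ! p = c" "ins_after c a xs = ins xs (Suc p) a"
      using Cons.IH by blast
    then show ?thesis using False by (intro exI[of _ "Suc p"]) (simp add: ins_def)
  qed
qed

lemma no_contains_ins:
  assumes av: "av L" and p: "p \<le> length L" and big: "\<forall>x\<in>set L. x < a"
  shows "\<not> contains_1_23_4 (ins L p a)"
proof
  assume "contains_1_23_4 (ins L p a)"
  then obtain i b c where ib: "i < b" and bc: "b + 1 < c" and cl: "c < length (ins L p a)"
    and o1: "ins L p a ! i < ins L p a ! b" and o2: "ins L p a ! b < ins L p a ! (b + 1)"
    and o3: "ins L p a ! (b + 1) < ins L p a ! c"
    unfolding contains_1_23_4_def by blast
  note nth = ins_nth[OF p]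
  have len: "length (ins L p a) = Suc (length L)" using ins_length[OF p] .
  have bg: "\<And>k. k < length L \<Longrightarrow> L ! k < a" using big by auto
  have avL: "\<And>i j. j < i \<Longrightarrow> Suc i < length L \<Longrightarrow> L ! i < L ! Suc i \<Longrightarrow> L ! i < L ! j"
    using av unfolding av_def by blast
  have le_a: "ins L p a ! k \<le> a" if "k < length (ins L p a)" for k
  proof -
    consider "k < p" | "k = p" | "p < k" by linarith
    then show ?thesis
    proof cases
      case 1 then show ?thesis using nth bg p by (simp add: less_imp_le)
    next
      case 2 then show ?thesis using nth by simp
    next
      case 3 then have "k - 1 < length L" using that len by simp
      then show ?thesis using 3 nth bg by (simp add: less_imp_le)
    qed
  qed
  have nb1: "b + 1 \<noteq> p" using o3 le_a[OF cl] nth by auto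
  have nb: "b \<noteq> p" using o2 o3 le_a[OF cl] nth by auto
  have ni: "i \<noteq> p" using o1 o2 o3 le_a[OF cl] nth by auto
  show False
  proof (cases "b + 1 < p")
    case True
    then show False using avL[of i b] o1 o2 nth ib p by auto
  next
    case False
    then have bp: "p < b" using nb nb1 by auto
    have e: "ins L p a ! b = L ! (b - 1)" "ins L p a ! (b + 1) = L ! b" using nth bp by auto
    have asc: "L ! (b - 1) < L ! Suc (b - 1)" using o2 e bp by simp
    have bl: "Suc (b - 1) < length L" using bp bc cl len by simp
    show False
    proof (cases "i < p")
      case True
      then have "i < b - 1" using bp by linarith
      then show False using avL[of i "b - 1"] asc bl o1 e nth bp ib True by auto
    next
      case False
      then have "p < i" using ni by auto
      then have "i - 1 < b - 1" using ib by linarith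
      then show False using avL[of "i - 1" "b - 1"] asc bl o1 e nth bp ib \<open>p < i\<close> by auto
    qed
  qed
qed

fun enc :: "nat \<Rightarrow> (nat \<Rightarrow> nat) \<Rightarrow> nat list" where
  "enc 0 g = []"
| "enc (Suc N) g = (if g (Suc N) = Suc N then Suc N # enc N g else ins_after (g (Suc N)) (Suc N) (enc N g))"

definition Pg :: "nat \<Rightarrow> (nat \<Rightarrow> nat) \<Rightarrow> bool" where
  "Pg N g \<longleftrightarrow> (\<forall>x\<in>{1..N}. g x \<in> {1..N} \<and> g (g x) = g x \<and> g x \<le> x)"

lemma Pg_mono: "Pg (Suc N) g \<Longrightarrow> Pg N g"
  unfolding Pg_def
proof (intro ballI)
  fix x assume A: "\<forall>x\<in>{1..Suc N}. g x \<in> {1..Suc N} \<and> g (g x) = g x \<and> g x \<le> x" and x: "x \<in> {1..N}"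
  then have "g x \<in> {1..Suc N} \<and> g (g x) = g x \<and> g x \<le> x" by auto
  then show "g x \<in> {1..N} \<and> g (g x) = g x \<and> g x \<le> x" using x by auto
qed

lemma GG_Pg: "g \<in> GG N \<Longrightarrow> Pg N g"
  unfolding GG_def Pg_def by auto

lemma ins0: "ins L 0 a = a # L" unfolding ins_def by simp

lemma enc_props:
  "Pg N g \<Longrightarrow> distinct (enc N g) \<and> set (enc N g) = {1..N} \<and> av (enc N g) \<and>
     (\<forall>c\<in>{1..N}. g c = c \<longrightarrow> lrmin (enc N g) c)"
proof (induction N)
  case 0
  then show ?case by (simp add: av_def lrmin_def)
next
  case (Suc N)
  have P: "Pg N g" using Pg_mono[OF Suc.prems] .
  define L where "L = enc N g"
  have IH: "distinct L" "set L = {1..N}" "av L" "\<And>c. c \<in> {1..N} \<Longrightarrow> g c = c \<Longrightarrow> lrmin L c"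
    using Suc.IH[OF P] unfolding L_def by auto
  have big: "\<forall>x\<in>set L. x < Suc N" using IH(2) by auto
  have aL: "Suc N \<notin> set L" using IH(2) by auto
  show ?case
  proof (cases "g (Suc N) = Suc N")
    case True
    then have E: "enc (Suc N) g = ins L 0 (Suc N)" unfolding L_def by (simp add: ins0)
    have d: "distinct (enc (Suc N) g)" unfolding E using ins_distinct[OF IH(1) aL] .
    have s: "set (enc (Suc N) g) = {1..Suc N}" unfolding E ins_set IH(2) by auto
    have a: "av (enc (Suc N) g)" unfolding E by (rule av_ins[OF IH(3) _ big]) auto
    have l: "lrmin (enc (Suc N) g) c" if c: "c \<in> {1..Suc N}" "g c = c" for c
    proof (cases "c = Suc N")
      case True
      show ?thesis unfolding E ins0 lrmin_def True
      proof (intro allI impI)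
        fix i j assume "j < i" "i < length (Suc N # L)" "(Suc N # L) ! i = Suc N"
        then have "L ! (i - 1) = Suc N" "i - 1 < length L" by (auto simp: nth_Cons')
        then show "Suc N < (Suc N # L) ! j" using aL nth_mem by metis
      qed
    next
      case False
      then have "c \<in> {1..N}" using c by auto
      then show ?thesis unfolding E using lrmin_ins[OF IH(4)[OF _ c(2)] _ big] IH(2) by auto
    qed
    show ?thesis using d s a l by blast
  next
    case False
    define c where "c = g (Suc N)"
    have cP: "c \<in> {1..Suc N}" "g c = c" using Suc.prems unfolding Pg_def c_def by auto
    then have cN: "c \<in> {1..N}" using False unfolding c_def by auto
    then have cL: "c \<in> set L" using IH(2) by simp
    obtain p where p: "p < length L" "L ! p = c" "ins_after c (Suc N) L = ins L (Suc p) (Suc N)"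
      using ins_after_eq[OF cL] by blast
    have E: "enc (Suc N) g = ins L (Suc p) (Suc N)" using False p(3) unfolding L_def c_def by simp
    have d: "distinct (enc (Suc N) g)" unfolding E using ins_distinct[OF IH(1) aL] .
    have s: "set (enc (Suc N) g) = {1..Suc N}" unfolding E ins_set IH(2) by auto
    have lmc: "lrmin L c" using IH(4)[OF cN cP(2)] .
    have a: "av (enc (Suc N) g)" unfolding E
    proof (rule av_ins[OF IH(3) _ big])
      show "Suc p \<le> length L" using p by simp
      show "\<forall>j<Suc p - 1. L ! (Suc p - 1) < L ! j"
        using lmc p unfolding lrmin_def by auto
    qed
    have l: "lrmin (enc (Suc N) g) c'" if c': "c' \<in> {1..Suc N}" "g c' = c'" for c'
    proof -
      have "c' \<noteq> Suc N" using False c' by auto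
      then have "c' \<in> {1..N}" using c' by auto
      then show ?thesis unfolding E using lrmin_ins[OF IH(4)[OF _ c'(2)] _ big] IH(2) p(1) by auto
    qed
    show ?thesis using d s a l by blast
  qed
qed

lemma enc_Suc_ins:
  assumes "Pg (Suc N) g"
  shows "\<exists>p \<le> length (enc N g). enc (Suc N) g = ins (enc N g) p (Suc N) \<and>
     (if g (Suc N) = Suc N then p = 0 else 0 < p \<and> enc N g ! (p - 1) = g (Suc N))"
proof (cases "g (Suc N) = Suc N")
  case True
  then show ?thesis by (intro exI[of _ 0]) (simp add: ins0)
next
  case False
  have P: "Pg N g" using Pg_mono[OF assms] .
  have cP: "g (Suc N) \<in> {1..Suc N}" using assms unfolding Pg_def by auto
  then have "g (Suc N) \<in> {1..N}" using False by auto
  then have cL: "g (Suc N) \<in> set (enc N g)" using enc_props[OF P] by simp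
  obtain p where p: "p < length (enc N g)" "enc N g ! p = g (Suc N)"
    "ins_after (g (Suc N)) (Suc N) (enc N g) = ins (enc N g) (Suc p) (Suc N)"
    using ins_after_eq[OF cL] by blast
  show ?thesis using False p by (intro exI[of _ "Suc p"]) auto
qed

lemma enc_inj: "Pg N g \<Longrightarrow> Pg N g' \<Longrightarrow> enc N g = enc N g' \<Longrightarrow> \<forall>x\<in>{1..N}. g x = g' x"
proof (induction N)
  case 0 then show ?case by simp
next
  case (Suc N)
  have P: "Pg N g" "Pg N g'" using Pg_mono Suc.prems by auto
  obtain p where p: "p \<le> length (enc N g)" "enc (Suc N) g = ins (enc N g) p (Suc N)"
     "(if g (Suc N) = Suc N then p = 0 else 0 < p \<and> enc N g ! (p - 1) = g (Suc N))"
    using enc_Suc_ins[OF Suc.prems(1)] by blast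
  obtain p' where p': "p' \<le> length (enc N g')" "enc (Suc N) g' = ins (enc N g') p' (Suc N)"
     "(if g' (Suc N) = Suc N then p' = 0 else 0 < p' \<and> enc N g' ! (p' - 1) = g' (Suc N))"
    using enc_Suc_ins[OF Suc.prems(2)] by blast
  have n1: "Suc N \<notin> set (enc N g)" "Suc N \<notin> set (enc N g')" using enc_props[OF P(1)] enc_props[OF P(2)] by auto
  have e: "ins (enc N g) p (Suc N) = ins (enc N g') p' (Suc N)" using p(2) p'(2) Suc.prems(3) by simp
  have LL: "enc N g = enc N g'" and pp: "p = p'" using ins_inj[OF n1 p(1) p'(1) e] by auto
  have low: "\<forall>x\<in>{1..N}. g x = g' x" using Suc.IH[OF P LL] .
  have "g (Suc N) = g' (Suc N)"
    using p(3) p'(3) pp LL by (auto split: if_splits)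
  then show ?case using low by (metis atLeastAtMost_iff le_SucE)
qed

lemma enc_len: "Pg N g \<Longrightarrow> length (enc N g) = N"
proof -
  assume P: "Pg N g"
  have "distinct (enc N g)" "set (enc N g) = {1..N}" using enc_props[OF P] by auto
  then show ?thesis by (metis card_atLeastAtMost diff_Suc_1 distinct_card)
qed

lemma alpha_lower: "Suc N * card (GG N) \<le> alpha_1_23_4 (Suc N)"
proof -
  define phi where "phi = (\<lambda>(g, j). ins (enc N g) j (Suc N))"
  define T where "T = {p \<in> permutations_of_set {1..Suc N}. \<not> contains_1_23_4 p}"
  have inj: "inj_on phi (GG N \<times> {0..N})"
  proof (rule inj_onI, clarify)
    fix g j g' j' assume g: "g \<in> GG N" "j \<in> {0..N}" and g': "g' \<in> GG N" "j' \<in> {0..N}"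
      and e: "phi (g, j) = phi (g', j')"
    have P: "Pg N g" "Pg N g'" using g g' GG_Pg by auto
    have n1: "Suc N \<notin> set (enc N g)" "Suc N \<notin> set (enc N g')" using enc_props[OF P(1)] enc_props[OF P(2)] by auto
    have l: "j \<le> length (enc N g)" "j' \<le> length (enc N g')" using enc_len P g g' by auto
    have "enc N g = enc N g'" "j = j'" using ins_inj[OF n1 l] e unfolding phi_def by auto
    then have "\<forall>x\<in>{1..N}. g x = g' x" "j = j'" using enc_inj P by auto
    moreover have "g x = g' x" if "x \<notin> {1..N}" for x
      using g g' that unfolding GG_def by (auto simp: PiE_iff extensional_def)
    ultimately show "g = g' \<and> j = j'" by blast
  qed
  have img: "phi ` (GG N \<times> {0..N}) \<subseteq> T"
  proof clarify
    fix g j assume g: "g \<in> GG N" "j \<in> {0..N}"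
    have P: "Pg N g" using g GG_Pg by auto
    have pr: "distinct (enc N g)" "set (enc N g) = {1..N}" "av (enc N g)" using enc_props[OF P] by auto
    have n1: "Suc N \<notin> set (enc N g)" using pr by auto
    have l: "j \<le> length (enc N g)" using enc_len P g by auto
    have big: "\<forall>x\<in>set (enc N g). x < Suc N" using pr by auto
    have "set (phi (g, j)) = {1..Suc N}" unfolding phi_def using pr by (auto simp: ins_set)
    moreover have "distinct (phi (g, j))" unfolding phi_def using ins_distinct[OF pr(1) n1] by simp
    moreover have "\<not> contains_1_23_4 (phi (g, j))" unfolding phi_def using no_contains_ins[OF pr(3) l big] by simp
    ultimately show "phi (g, j) \<in> T" unfolding T_def permutations_of_set_def by auto
  qed
  have finT: "finite T" unfolding T_def by simp
  have "card (GG N \<times> {0..N}) \<le> card T" using card_inj_on_le[OF inj img finT] .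
  then show ?thesis unfolding T_def alpha_1_23_4_def by (simp add: card_cartesian_product mult.commute)
qed

lemma sum_split_bound:
  "(\<Sum>g\<in>GG N. card (fixs N g) + 1) \<le> k * card (GG N) + Suc N * card {g\<in>GG N. k \<le> card (fixs N g)}"
proof -
  have "(\<Sum>g\<in>GG N. card (fixs N g) + 1) \<le> (\<Sum>g\<in>GG N. k + (if k \<le> card (fixs N g) then Suc N else 0))"
  proof (intro sum_mono)
    fix g assume "g \<in> GG N"
    show "card (fixs N g) + 1 \<le> k + (if k \<le> card (fixs N g) then Suc N else 0)"
      using fixs_card_le[of N g] by auto
  qed
  also have "\<dots> = k * card (GG N) + (\<Sum>g\<in>GG N. if k \<le> card (fixs N g) then Suc N else 0)"
    by (simp add: sum.distrib)
  also have "(\<Sum>g\<in>GG N. if k \<le> card (fixs N g) then Suc N else 0) = (\<Sum>g\<in>{g\<in>GG N. k \<le> card (fixs N g)}. Suc N)"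
    by (simp only: sum.inter_filter[OF GG_finite])
  also have "\<dots> = Suc N * card {g\<in>GG N. k \<le> card (fixs N g)}" by simp
  finally show ?thesis .
qed

lemma nat_key:
  fixes s N :: nat
  assumes s: "4 \<le> s" and N: "(4 * s) ^ s \<le> N"
  defines "q \<equiv> N div s + 1"
  shows "2 ^ N * card {g\<in>GG N. 2 * q \<le> card (fixs N g)} \<le> card (GG N)"
proof -
  have s0: "0 < s" using s by simp
  have N4: "4 \<le> N"
  proof -
    have "4 \<le> 4 * s" using s by simp
    also have "4 * s \<le> (4 * s) ^ s" using s by (intro self_le_power) auto
    finally show ?thesis using N by simp
  qed
  have N1: "1 \<le> N" using N4 by simp
  have qs: "N \<le> q * s"
  proof -
    have m: "N mod s < s" using s0 by simp
    have e: "N div s * s + N mod s = N" by simp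
    have "q * s = N div s * s + s" unfolding q_def by (simp add: algebra_simps)
    then show ?thesis using m e by linarith
  qed
  have q1: "1 \<le> q" unfolding q_def by simp
  have qN2: "2 * q \<le> N"
  proof -
    have "N div s \<le> N div 4" using s by (simp add: div_le_mono2)
    then have "2 * (N div s) \<le> 2 * (N div 4)" by simp
    also have "\<dots> \<le> N - 2" using N4 by linarith
    finally show ?thesis unfolding q_def using N4 by simp
  qed
  have qN: "q \<le> N" using qN2 by simp
  have big: "(4 * s) ^ N \<le> N ^ q"
  proof -
    have "((4 * s) ^ N) ^ s = (4 * s) ^ (N * s)" by (rule power_mult[symmetric])
    also have "N * s = s * N" by (rule mult.commute)
    also have "(4 * s) ^ (s * N) = ((4 * s) ^ s) ^ N" by (rule power_mult)
    also have "\<dots> \<le> N ^ N" by (rule power_mono[OF N]) simp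
    also have "\<dots> \<le> N ^ (q * s)" by (rule power_increasing[OF qs N1])
    also have "\<dots> = (N ^ q) ^ s" by (simp only: power_mult)
    finally have "((4 * s) ^ N) ^ s \<le> (N ^ q) ^ s" .
    moreover have "Suc (s - 1) = s" using s0 by simp
    ultimately have "((4 * s) ^ N) ^ Suc (s - 1) \<le> (N ^ q) ^ Suc (s - 1)" by simp
    then show ?thesis by (rule power_le_imp_le_base) simp
  qed
  have main: "4 ^ N * N ^ (N - 2 * q) \<le> q ^ (N - q)"
  proof -
    define X where "X = s ^ (N - q) * N ^ q"
    have X0: "0 < X" unfolding X_def using s0 N1 by simp
    have e1: "N ^ (N - 2 * q) * N ^ q = N ^ (N - q)"
    proof -
      have "N - 2 * q + q = N - q" using qN2 by simp
      then show ?thesis by (metis power_add)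
    qed
    have i1: "(4::nat) ^ N * s ^ (N - q) \<le> (4 * s) ^ N"
    proof -
      have "s ^ (N - q) \<le> s ^ N" using s by (intro power_increasing) auto
      then have "(4::nat) ^ N * s ^ (N - q) \<le> 4 ^ N * s ^ N" by simp
      then show ?thesis by (simp add: power_mult_distrib)
    qed
    have i2: "N ^ (N - q) \<le> (q * s) ^ (N - q)" using qs by (intro power_mono) auto
    have "4 ^ N * N ^ (N - 2 * q) * X = (4 ^ N * s ^ (N - q)) * (N ^ (N - 2 * q) * N ^ q)"
      unfolding X_def by (simp add: algebra_simps)
    also have "\<dots> = (4 ^ N * s ^ (N - q)) * N ^ (N - q)" using e1 by simp
    also have "\<dots> \<le> (4 * s) ^ N * N ^ (N - q)" using i1 by (intro mult_right_mono) auto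
    also have "\<dots> \<le> N ^ q * N ^ (N - q)" using big by (intro mult_right_mono) auto
    also have "\<dots> \<le> N ^ q * (q * s) ^ (N - q)" using i2 by (intro mult_left_mono) auto
    also have "\<dots> = q ^ (N - q) * X" unfolding X_def by (simp add: power_mult_distrib algebra_simps)
    finally have "4 ^ N * N ^ (N - 2 * q) * X \<le> q ^ (N - q) * X" .
    then show ?thesis using X0 by simp
  qed
  have "2 ^ N * card {g\<in>GG N. 2 * q \<le> card (fixs N g)} \<le> 2 ^ N * (2 ^ N * N ^ (N - 2 * q))"
    using GG_many[OF N1, of "2 * q"] by simp
  also have "\<dots> = 4 ^ N * N ^ (N - 2 * q)" by (simp add: power_mult_distrib[symmetric])
  also have "\<dots> \<le> q ^ (N - q)" using main .
  also have "\<dots> \<le> card (GG N)" using GG_lower[OF q1 qN] .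
  finally show ?thesis .
qed

lemma key_bound:
  fixes s N :: nat
  assumes s: "4 \<le> s" and N: "(4 * s) ^ s \<le> N"
  shows "real (bell (Suc N)) / real (alpha_1_23_4 (Suc N)) \<le> 2 / real s + 3 / real (Suc N)"
proof -
  define q where "q = N div s + 1"
  define G where "G = card (GG N)"
  define M where "M = card {g\<in>GG N. 2 * q \<le> card (fixs N g)}"
  have b: "bell (Suc N) \<le> 2 * q * G + Suc N * M"
    using bell_le_GG[of "Suc N"] GG_rec[of N] sum_split_bound[of N "2 * q"]
    unfolding G_def M_def by linarith
  have a: "Suc N * G \<le> alpha_1_23_4 (Suc N)" using alpha_lower[of N] unfolding G_def .
  have MG: "2 ^ N * M \<le> G" using nat_key[OF s N] unfolding M_def G_def q_def .
  have G1: "1 \<le> G"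
  proof -
    have "1 \<le> (4 * s) ^ s" using s by (intro one_le_power) simp
    then have "1 \<le> N" using N by linarith
    then show ?thesis using GG_lower[of 1 N] unfolding G_def by simp
  qed
  have Gp: "0 < real G" using G1 by simp
  have Np: "0 < real (Suc N)" by simp
  have rb: "real (bell (Suc N)) \<le> real (2 * q) * real G + real (Suc N) * real M"
    using b by (metis of_nat_add of_nat_le_iff of_nat_mult)
  have ra: "real (Suc N) * real G \<le> real (alpha_1_23_4 (Suc N))"
    using a by (metis of_nat_le_iff of_nat_mult)
  have apos: "0 < real (Suc N) * real G" using Gp Np by simp
  have "real (bell (Suc N)) / real (alpha_1_23_4 (Suc N)) \<le> real (bell (Suc N)) / (real (Suc N) * real G)"
    by (intro divide_left_mono ra apos mult_pos_pos) (use apos ra in simp_all)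
  also have "\<dots> \<le> (real (2 * q) * real G + real (Suc N) * real M) / (real (Suc N) * real G)"
    by (intro divide_right_mono rb) (use apos in simp)
  also have "\<dots> = real (2 * q) / real (Suc N) + real M / real G"
    using Gp Np by (simp add: field_simps)
  also have "real M / real G \<le> 1 / 2 ^ N"
  proof -
    have "real (2 ^ N * M) \<le> real G" using MG by (simp only: of_nat_le_iff)
    then have "2 ^ N * real M \<le> real G" by simp
    then show ?thesis using Gp by (simp add: field_simps)
  qed
  also have "(1::real) / 2 ^ N \<le> 1 / real (Suc N)"
  proof -
    have "Suc N \<le> 2 ^ N" 
      by (induction N) auto
    then have "real (Suc N) \<le> 2 ^ N" by (metis of_nat_le_iff of_nat_numeral of_nat_power)
    then show ?thesis by (intro divide_left_mono) simp_all
  qed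
  also have "real (2 * q) / real (Suc N) \<le> 2 / real s + 2 / real (Suc N)"
  proof -
    have d: "real (N div s) \<le> real N / real s" by (rule of_nat_div_le_of_nat)
    have "real (2 * q) = 2 * real (N div s) + 2" unfolding q_def by simp
    also have "\<dots> \<le> 2 * (real N / real s) + 2" using d by simp
    finally have "real (2 * q) / real (Suc N) \<le> (2 * (real N / real s) + 2) / real (Suc N)"
      by (intro divide_right_mono) simp_all
    also have "\<dots> = 2 * (real N / real (Suc N)) / real s + 2 / real (Suc N)"
      by (simp add: add_divide_distrib)
    also have "real N / real (Suc N) \<le> 1" by simp
    then have "2 * (real N / real (Suc N)) \<le> 2" by linarith
    then have "2 * (real N / real (Suc N)) / real s \<le> 2 / real s" using s
      by (intro divide_right_mono) simp_all
    finally show ?thesis by simp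
  qed
  finally show ?thesis by simp
qed

theorem mainTheorem10:
  shows "(\<lambda>n. real (bell n) / real (alpha_1_23_4 n)) \<longlonglongrightarrow> 0"
proof (rule LIMSEQ_I)
  fix r :: real assume r: "0 < r"
  define s where "s = max 4 (nat \<lceil>4 / r\<rceil> + 1)"
  have s4: "4 \<le> s" unfolding s_def by simp
  have "4 / r < real s" unfolding s_def by linarith
  then have hs: "2 / real s < r / 2" using r s4 by (simp add: field_simps)
  define N0 where "N0 = max ((4 * s) ^ s) (nat \<lceil>6 / r\<rceil>)"
  show "\<exists>no. \<forall>n\<ge>no. norm (real (bell n) / real (alpha_1_23_4 n) - 0) < r"
  proof (intro exI allI impI)
    fix n assume n: "Suc N0 \<le> n"
    define N where "N = n - 1"
    have nN: "n = Suc N" using n unfolding N_def by simp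
    have NN: "N0 \<le> N" using n unfolding N_def by simp
    have N1: "(4 * s) ^ s \<le> N" using le_trans[OF max.cobounded1 NN[unfolded N0_def]] .
    have N2: "nat \<lceil>6 / r\<rceil> \<le> N" using le_trans[OF max.cobounded2 NN[unfolded N0_def]] .
    have "6 / r \<le> real (nat \<lceil>6 / r\<rceil>)" by (rule real_nat_ceiling_ge)
    also have "\<dots> \<le> real N" using N2 by (simp only: of_nat_le_iff)
    finally have "6 / r \<le> real N" .
    then have "6 / r < real (Suc N)" by simp
    then have h3: "3 / real (Suc N) < r / 2" using r by (simp add: field_simps)
    have kb: "real (bell n) / real (alpha_1_23_4 n) \<le> 2 / real s + 3 / real (Suc N)"
      unfolding nN by (rule key_bound[OF s4 N1])
    have nn: "0 \<le> real (bell n) / real (alpha_1_23_4 n)" by simp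
    show "norm (real (bell n) / real (alpha_1_23_4 n) - 0) < r"
      using kb nn hs h3 by simp
  qed
qed

end
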